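(* Let $A\in\mathbb{R}^{n\times n}$ be symmetric positive-semidefinite, $b\in\mathbb{R}^n$, $g:\mathbb{R}^n\to(-\infty,\infty]$ proper, lower semicontinuous and convex, and $\gamma>0$ such that $I-\gamma A$ is positive-definite. Set $Q:=(I-\gamma A)^{-1}$, $c:=\gamma Qb$, $P:=Q-I$, and $\psi(u):=\frac12\langle Pu,u\rangle+\langle c,u\rangle+\gamma e_\gamma g(u)$. Then $\psi$ is continuously differentiable and $\psi(u)=\frac12\langle Pu,u\rangle+\langle c,u\rangle+\gamma g(\operatorname{Prox}_{\gamma g}(u))+\frac12\|u-\operatorname{Prox}_{\gamma g}(u)\|^2$. Moreover, $\nabla\psi(u)=Qu-\operatorname{Prox}_{\gamma g}(u)+c$ and $\nabla\psi$ is Lipschitz continuous on $\mathbb{R}^n$ with modulus $\ell:=1+\|Q\|$. If in addition $A$ is positive-definite, then $\psi$ is strongly convex with modulus $\lambda_{\min}(P)>0$.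
   Context: Moreau envelope and proximal map: $e_\gamma g(x):=\inf_y\{g(y)+\frac1{2\gamma}\|y-x\|^2\}$, $\operatorname{Prox}_{\gamma g}(x):=\operatorname{argmin}_y\{g(y)+\frac1{2\gamma}\|y-x\|^2\}$. $\lambda_{\min}(P)$ is the smallest eigenvalue of $P$. *)

theory Defs
  imports "HOL-Analysis.Analysis"
begin

definition proper_fun :: "('a \<Rightarrow> ereal) \<Rightarrow> bool" where
  "proper_fun g \<longleftrightarrow> (\<forall>x. g x \<noteq> -\<infinity>) \<and> (\<exists>x. g x \<noteq> \<infinity>)"

definition lsc_fun :: "('a::topological_space \<Rightarrow> ereal) \<Rightarrow> bool" where
  "lsc_fun g \<longleftrightarrow> (\<forall>x. g x \<le> Liminf (at x) g)"

definition ereal_convex :: "('a::real_vector \<Rightarrow> ereal) \<Rightarrow> bool" where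
  "ereal_convex g \<longleftrightarrow> (\<forall>x y u v. u \<ge> 0 \<longrightarrow> v \<ge> 0 \<longrightarrow> u + v = 1 \<longrightarrow>
      g (u *\<^sub>R x + v *\<^sub>R y) \<le> ereal u * g x + ereal v * g y)"

definition moreau_env :: "real \<Rightarrow> ('a::real_normed_vector \<Rightarrow> ereal) \<Rightarrow> 'a \<Rightarrow> ereal" where
  "moreau_env \<gamma> g x = (INF y. g y + ereal (norm (y - x) ^ 2 / (2 * \<gamma>)))"

definition prox :: "real \<Rightarrow> ('a::real_normed_vector \<Rightarrow> ereal) \<Rightarrow> 'a \<Rightarrow> 'a" where
  "prox \<gamma> g x = (THE y. \<forall>z. g y + ereal (norm (y - x) ^ 2 / (2 * \<gamma>))
                              \<le> g z + ereal (norm (z - x) ^ 2 / (2 * \<gamma>)))"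

definition psd_mat :: "real^'n^'n \<Rightarrow> bool" where
  "psd_mat M \<longleftrightarrow> (\<forall>x. x \<bullet> (M *v x) \<ge> 0)"

definition pd_mat :: "real^'n^'n \<Rightarrow> bool" where
  "pd_mat M \<longleftrightarrow> (\<forall>x. x \<noteq> 0 \<longrightarrow> x \<bullet> (M *v x) > 0)"

definition lambda_min :: "real^'n^'n \<Rightarrow> real" where
  "lambda_min M = Inf {t. \<exists>v. v \<noteq> 0 \<and> M *v v = t *\<^sub>R v}"

definition strongly_convex_on :: "'a::real_inner set \<Rightarrow> ('a \<Rightarrow> real) \<Rightarrow> real \<Rightarrow> bool" where
  "strongly_convex_on S f \<mu> \<longleftrightarrow> convex_on S (\<lambda>x. f x - \<mu> / 2 * norm x ^ 2)"

end

theory Submission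
  imports Defs
begin


lemma lsc_open:
  fixes g :: "'a::topological_space \<Rightarrow> ereal"
  assumes "lsc_fun g" shows "open {y. c < g y}"
proof (subst open_subopen, intro ballI)
  fix x assume "x \<in> {y. c < g y}"
  hence cx: "c < g x" by simp
  also have "g x \<le> Liminf (at x) g" using assms unfolding lsc_fun_def by blast
  finally have "eventually (\<lambda>y. c < g y) (at x)" using le_Liminf_iff by blast
  then obtain S where S: "open S" "x \<in> S" "\<forall>y\<in>S. y \<noteq> x \<longrightarrow> c < g y"
    unfolding eventually_at_topological by auto
  show "\<exists>T. open T \<and> x \<in> T \<and> T \<subseteq> {y. c < g y}"
    using S cx by (intro exI[of _ S]) auto
qed

lemma ereal_less_add_real:
  assumes "ereal r < a" shows "ereal (r + s) < a + ereal s"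
  using assms by (cases a) auto

lemma lsc_plus_open:
  fixes g :: "'a::metric_space \<Rightarrow> ereal"
  assumes "lsc_fun g" "\<forall>x. g x \<noteq> -\<infinity>" "continuous_on UNIV q"
  shows "open {y. c < g y + ereal (q y)}"
proof (subst open_subopen, intro ballI)
  fix x assume "x \<in> {y. c < g y + ereal (q y)}"
  hence cx: "c < g x + ereal (q x)" by simp
  show "\<exists>T. open T \<and> x \<in> T \<and> T \<subseteq> {y. c < g y + ereal (q y)}"
  proof (cases c)
    case MInf
    have "-\<infinity> < g y + ereal (q y)" for y using assms(2)[rule_format, of y] by (cases "g y") auto
    then show ?thesis using MInf by (intro exI[of _ UNIV]) auto
  next
    case PInf then show ?thesis using cx by simp
  next
    case (real r)
    have "ereal (r - q x) < g x" using cx real by (cases "g x") auto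
    then obtain d where d: "ereal (r - q x) < ereal d" "ereal d < g x"
      using ereal_dense2 by blast
    define e where "e = d - (r - q x)"
    have e: "e > 0" using d(1) e_def by simp
    define T where "T = {y. ereal d < g y} \<inter> {y. dist (q y) (q x) < e}"
    have "open {y. dist (q y) (q x) < e}"
      using assms(3) by (intro open_Collect_less) (auto intro!: continuous_intros)
    hence "open T" unfolding T_def using lsc_open[OF assms(1)] by auto
    moreover have "x \<in> T" using d e unfolding T_def by auto
    moreover have "T \<subseteq> {y. c < g y + ereal (q y)}"
    proof
      fix y assume "y \<in> T"
      hence y: "ereal d < g y" "dist (q y) (q x) < e" unfolding T_def by auto
      have y1: "ereal (d + q y) < g y + ereal (q y)" using ereal_less_add_real[OF y(1)] by simp
      have "r < d + q y" using y(2) e_def by (auto simp: dist_real_def)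
      hence y2: "ereal r < ereal (d + q y)" by simp
      have "c < g y + ereal (q y)" unfolding real using y2 y1 by (rule order.strict_trans)
      then show "y \<in> {y. c < g y + ereal (q y)}" by simp
    qed
    ultimately show ?thesis by blast
  qed
qed

lemma open_superlevel_attains_min:
  fixes h :: "'a::topological_space \<Rightarrow> 'b::linorder"
  assumes opn: "\<And>c. open {y. h c < h y}" and K: "compact K" "K \<noteq> {}"
  shows "\<exists>x\<in>K. \<forall>y\<in>K. h x \<le> h y"
proof (rule ccontr)
  assume "\<not> ?thesis"
  hence nm: "\<forall>x\<in>K. \<exists>y\<in>K. h y < h x" by (auto simp: not_le)
  have "K \<subseteq> (\<Union>c\<in>K. {y. h c < h y})" using nm by auto
  then obtain C where C: "C \<subseteq> K" "finite C" "K \<subseteq> (\<Union>c\<in>C. {y. h c < h y})"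
    using compactE_image[OF K(1), of K "\<lambda>c. {y. h c < h y}"] opn by blast
  have "C \<noteq> {}" using C(3) K(2) by auto
  define m where "m = Min (h ` C)"
  have "m \<in> h ` C" unfolding m_def using Min_in[of "h ` C"] C(2) \<open>C \<noteq> {}\<close> by auto
  then obtain c0 where c0: "c0 \<in> C" "h c0 = m" by auto
  have "c0 \<in> K" using C(1) c0 by auto
  then obtain c where "c \<in> C" "h c < h c0" using C(3) by auto
  moreover have "m \<le> h c" unfolding m_def using C(2) \<open>c \<in> C\<close> by simp
  ultimately show False using c0 by simp
qed

lemma norm_add_sq: "norm (a + b)^2 = norm a ^2 + 2 * inner a b + norm b ^2" for a b :: "'a::real_inner"
  by (simp add: power2_norm_eq_inner inner_add_left inner_add_right inner_commute)

lemma norm_diff_sq: "norm (a - b)^2 = norm a ^2 - 2 * inner a b + norm b ^2" for a b :: "'a::real_inner"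
  by (simp add: power2_norm_eq_inner inner_diff_left inner_diff_right inner_commute)

definition Fq :: "real \<Rightarrow> ('a::real_normed_vector \<Rightarrow> ereal) \<Rightarrow> 'a \<Rightarrow> 'a \<Rightarrow> ereal" where
  "Fq \<gamma> g x y = g y + ereal (norm (y - x) ^ 2 / (2 * \<gamma>))"

lemma small_t:
  fixes a b c :: real
  assumes "\<And>t. 0 < t \<Longrightarrow> t \<le> 1 \<Longrightarrow> a \<le> b + t * c"
  shows "a \<le> b"
proof (rule ccontr)
  assume "\<not> a \<le> b"
  define t where "t = min 1 ((a - b) / (2 * (\<bar>c\<bar> + 1)))"
  have t: "0 < t" "t \<le> 1" using \<open>\<not> a \<le> b\<close> unfolding t_def by auto
  have "t \<le> (a - b) / (2 * (\<bar>c\<bar> + 1))" unfolding t_def by simp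
  hence "t * \<bar>c\<bar> \<le> (a - b) / (2 * (\<bar>c\<bar> + 1)) * \<bar>c\<bar>" by (rule mult_right_mono) simp
  also have "\<dots> < a - b"
  proof -
    have ab: "0 < a - b" using \<open>\<not> a \<le> b\<close> by simp
    have "0 < \<bar>c\<bar> + 1" using abs_ge_zero[of c] by linarith
    hence dpos: "0 < 2 * (\<bar>c\<bar> + 1)" by simp
    have lt1: "\<bar>c\<bar> / (2 * (\<bar>c\<bar> + 1)) < 1" using dpos abs_ge_zero[of c] by (subst pos_divide_less_eq) auto
    have "(a - b) / (2 * (\<bar>c\<bar> + 1)) * \<bar>c\<bar> = (a - b) * (\<bar>c\<bar> / (2 * (\<bar>c\<bar> + 1)))" by simp
    also have "\<dots> < (a - b) * 1" using ab lt1 by (intro mult_strict_left_mono) auto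
    finally show ?thesis by simp
  qed
  moreover have "t * c \<le> t * \<bar>c\<bar>" using t(1) by (intro mult_left_mono) auto
  ultimately have "t * c < a - b" by linarith
  then show False using assms[OF t] by simp
qed

context
  fixes g :: "'a::euclidean_space \<Rightarrow> ereal" and \<gamma> :: real
  assumes proper: "proper_fun g" and lsc: "lsc_fun g" and cvx: "ereal_convex g" and gpos: "\<gamma> > 0"
begin

lemma g_notMInf: "g x \<noteq> -\<infinity>" using proper unfolding proper_fun_def by auto

lemma cvx_real:
  assumes "g x = ereal a" "g y = ereal b" "0 \<le> u" "0 \<le> v" "u + v = 1"
  shows "g (u *\<^sub>R x + v *\<^sub>R y) \<le> ereal (u * a + v * b)"
  using cvx assms unfolding ereal_convex_def by (metis times_ereal.simps(1) plus_ereal.simps(1))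

lemma g_lower:
  "\<exists>x0 a m K. g x0 = ereal a \<and> K \<ge> 0 \<and> (\<forall>y. ereal (m - K * norm (y - x0)) \<le> g y)"
proof -
  obtain x0 where x0: "g x0 \<noteq> \<infinity>" using proper unfolding proper_fun_def by auto
  then obtain a where a: "g x0 = ereal a" using g_notMInf by (cases "g x0") auto
  have "\<exists>y0\<in>cball x0 1. \<forall>y\<in>cball x0 1. g y0 \<le> g y"
    by (rule open_superlevel_attains_min) (use lsc_open[OF lsc] in auto)
  then obtain y0 where y0: "y0 \<in> cball x0 1" "\<And>y. y \<in> cball x0 1 \<Longrightarrow> g y0 \<le> g y" by blast
  have "g y0 \<le> g x0" using y0 by auto
  then obtain m where m: "g y0 = ereal m" using a g_notMInf[of y0] by (cases "g y0") auto
  have ma: "m \<le> a" using \<open>g y0 \<le> g x0\<close> a m by simp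
  define K where "K = a - m"
  have K: "K \<ge> 0" using ma K_def by simp
  have "ereal (m - K * norm (y - x0)) \<le> g y" for y
  proof (cases "norm (y - x0) \<le> 1")
    case True
    hence "g y0 \<le> g y" using y0(2)[of y] by (simp add: dist_norm norm_minus_commute)
    moreover have "m - K * norm (y - x0) \<le> m" using K by simp
    ultimately show ?thesis using m by (metis ereal_less_eq(3) order.trans)
  next
    case False
    define r where "r = norm (y - x0)"
    have r: "r > 1" using False r_def by simp
    define t where "t = 1 / r"
    have t: "0 < t" "t < 1" "t * r = 1" using r t_def by auto
    define z where "z = (1 - t) *\<^sub>R x0 + t *\<^sub>R y"
    have "z - x0 = t *\<^sub>R (y - x0)" unfolding z_def by (simp add: algebra_simps)
    hence "norm (z - x0) = 1" using t r_def by simp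
    hence "g y0 \<le> g z" using y0(2)[of z] by (simp add: dist_norm norm_minus_commute)
    show ?thesis
    proof (cases "g y")
      case (real b)
      have "g z \<le> ereal ((1 - t) * a + t * b)" unfolding z_def
        by (rule cvx_real) (use a real t in auto)
      hence "m \<le> (1 - t) * a + t * b" using \<open>g y0 \<le> g z\<close> m by (metis ereal_less_eq(3) order.trans)
      hence "r * m \<le> r * ((1 - t) * a + t * b)" using r by simp
      also have "\<dots> = r * a - a + b" using t by (simp add: algebra_simps)
      finally have "b \<ge> r * (m - a) + a" by (simp add: algebra_simps)
      moreover have "K * r = - (r * (m - a))" unfolding K_def by (simp add: algebra_simps)
      ultimately have "m - K * r \<le> b" using ma by linarith
      then show ?thesis using real r_def by simp
    qed (use g_notMInf in auto)
  qed
  then show ?thesis using a K by blast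
qed

lemma Fq_open: "open {y. c < Fq \<gamma> g x y}"
  unfolding Fq_def by (rule lsc_plus_open[OF lsc]) (use g_notMInf gpos in \<open>auto intro!: continuous_intros\<close>)

lemma prox_exists: "\<exists>p. \<forall>z. Fq \<gamma> g x p \<le> Fq \<gamma> g x z"
proof -
  obtain x0 a m K where a: "g x0 = ereal a" and K: "K \<ge> 0" and low: "\<And>y. ereal (m - K * norm (y - x0)) \<le> g y"
    using g_lower by blast
  define d where "d = norm (x - x0)"
  define V where "V = a + d^2 / (2 * \<gamma>)"
  have FV: "Fq \<gamma> g x x0 = ereal V" unfolding Fq_def V_def d_def using a by (simp add: norm_minus_commute)
  define R where "R = d + 2 * \<gamma> * (K + 1) + \<bar>V - m + K * d\<bar> + 1"
  have big: "Fq \<gamma> g x z > ereal V" if z: "norm (z - x0) > R" for z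
  proof -
    define r where "r = norm (z - x0)"
    define s where "s = r - d"
    have pos: "2 * \<gamma> * (K + 1) \<ge> 0" using gpos K by simp
    have s1: "s > 2 * \<gamma> * (K + 1)" and s2: "s > \<bar>V - m + K * d\<bar>"
      using z pos abs_ge_zero[of "V - m + K * d"] unfolding s_def r_def R_def by linarith+
    have "norm (z - x) \<ge> s" unfolding s_def r_def d_def using norm_triangle_ineq2[of "z - x0" "x - x0"] by simp
    moreover have "s \<ge> 0" using s1 pos by linarith
    ultimately have "norm (z - x)^2 \<ge> s^2" by (simp add: power_mono)
    hence q: "norm (z - x)^2 / (2 * \<gamma>) \<ge> s^2 / (2 * \<gamma>)" using gpos by (simp add: divide_right_mono)
    have "s / (2 * \<gamma>) > K + 1" using s1 gpos by (simp add: field_simps)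
    hence "s * (s / (2 * \<gamma>)) \<ge> s * (K + 1)" using \<open>s \<ge> 0\<close> by (intro mult_left_mono) auto
    hence sq: "s^2 / (2 * \<gamma>) \<ge> s * (K + 1)" by (simp add: power2_eq_square)
    have kr: "K * r = K * s + K * d" unfolding s_def by (simp add: algebra_simps)
    have sk: "s * (K + 1) = K * s + s" by (simp add: algebra_simps)
    have ab: "V - m + K * d \<le> \<bar>V - m + K * d\<bar>" by simp
    have "m - K * r + norm (z - x)^2 / (2 * \<gamma>) > V" using q s2 kr sk ab sq by linarith
    hence "ereal V < ereal (m - K * r) + ereal (norm (z - x)^2 / (2 * \<gamma>))" by simp
    moreover have "ereal (m - K * r) + ereal (norm (z - x)^2 / (2 * \<gamma>)) \<le> Fq \<gamma> g x z"
      unfolding Fq_def r_def using low[of z] by (rule add_right_mono)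
    ultimately show ?thesis by (rule order.strict_trans2)
  qed
  have "2 * \<gamma> * (K + 1) \<ge> 0" using gpos K by simp
  hence "R \<ge> 0" unfolding R_def d_def using norm_ge_zero[of "x - x0"] abs_ge_zero[of "V - m + K * norm (x - x0)"] by linarith
  have "\<exists>p\<in>cball x0 R. \<forall>y\<in>cball x0 R. Fq \<gamma> g x p \<le> Fq \<gamma> g x y"
    by (rule open_superlevel_attains_min) (use Fq_open \<open>R \<ge> 0\<close> in auto)
  then obtain p where p: "p \<in> cball x0 R" "\<And>y. y \<in> cball x0 R \<Longrightarrow> Fq \<gamma> g x p \<le> Fq \<gamma> g x y" by blast
  have "Fq \<gamma> g x p \<le> Fq \<gamma> g x z" for z
  proof (cases "z \<in> cball x0 R")
    case False
    hence "norm (z - x0) > R" by (simp add: dist_norm norm_minus_commute)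
    hence "Fq \<gamma> g x z > ereal V" by (rule big)
    moreover have "Fq \<gamma> g x p \<le> ereal V" using p(2)[of x0] FV \<open>R \<ge> 0\<close> by simp
    ultimately show ?thesis by simp
  qed (use p in auto)
  then show ?thesis by blast
qed

lemma Fq_min_finite:
  assumes "\<forall>z. Fq \<gamma> g x p \<le> Fq \<gamma> g x z" shows "\<exists>a. g p = ereal a"
proof -
  obtain x0 where x0: "g x0 \<noteq> \<infinity>" using proper unfolding proper_fun_def by auto
  have "Fq \<gamma> g x x0 \<noteq> \<infinity>" using x0 g_notMInf[of x0] unfolding Fq_def by (cases "g x0") auto
  hence "Fq \<gamma> g x p \<noteq> \<infinity>" using assms by (metis ereal_infty_less_eq(1))
  hence "g p \<noteq> \<infinity>" unfolding Fq_def by auto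
  then show ?thesis using g_notMInf[of p] by (cases "g p") auto
qed

lemma prox_unique:
  assumes p: "\<forall>z. Fq \<gamma> g x p \<le> Fq \<gamma> g x z" and q: "\<forall>z. Fq \<gamma> g x q \<le> Fq \<gamma> g x z"
  shows "p = q"
proof -
  obtain a where a: "g p = ereal a" using Fq_min_finite[OF p] by blast
  obtain b where b: "g q = ereal b" using Fq_min_finite[OF q] by blast
  define V where "V = a + norm (p - x)^2 / (2 * \<gamma>)"
  have "Fq \<gamma> g x p = Fq \<gamma> g x q" using p q by (meson order.antisym)
  hence Vq: "b + norm (q - x)^2 / (2 * \<gamma>) = V" unfolding V_def Fq_def using a b by simp
  define mid where "mid = (1/2) *\<^sub>R p + (1/2) *\<^sub>R q"
  have gm: "g mid \<le> ereal ((1/2) * a + (1/2) * b)" unfolding mid_def by (rule cvx_real) (use a b in auto)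
  have hx: "(1/2) *\<^sub>R x + (1/2) *\<^sub>R x = x" by (simp add: scaleR_add_left[symmetric])
  have "mid - x = (1/2) *\<^sub>R ((p - x) + (q - x))" unfolding mid_def using hx by (simp add: algebra_simps)
  hence "norm (mid - x)^2 = (1/4) * norm ((p - x) + (q - x))^2" by (simp add: power2_eq_square)
  also have "norm ((p - x) + (q - x))^2 = 2 * norm (p - x)^2 + 2 * norm (q - x)^2 - norm (p - q)^2"
    using norm_add_sq[of "p - x" "q - x"] norm_diff_sq[of "p - x" "q - x"] by simp
  finally have nm0: "norm (mid - x)^2 = (1/4) * (2 * norm (p - x)^2 + 2 * norm (q - x)^2 - norm (p - q)^2)" .
  have nm: "norm (mid - x)^2 = (norm (p - x)^2 + norm (q - x)^2) / 2 - norm (p - q)^2 / 4"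
    unfolding nm0 by (simp add: field_simps)
  have "Fq \<gamma> g x p \<le> Fq \<gamma> g x mid" using p by blast
  also have "\<dots> \<le> ereal ((1/2) * a + (1/2) * b) + ereal (norm (mid - x) ^ 2 / (2 * \<gamma>))"
    unfolding Fq_def using gm by (rule add_right_mono)
  finally have vle: "V \<le> (1/2) * a + (1/2) * b + norm (mid - x) ^ 2 / (2 * \<gamma>)"
    unfolding Fq_def V_def using a by simp
  have ea: "a = V - norm (p - x)^2 / (2 * \<gamma>)" using V_def by simp
  have eb: "b = V - norm (q - x)^2 / (2 * \<gamma>)" using Vq by simp
  have "(1/2) * a + (1/2) * b + norm (mid - x) ^ 2 / (2 * \<gamma>) = V - norm (p - q)^2 / (8 * \<gamma>)"
    unfolding nm ea eb using gpos by (simp add: field_simps)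
  hence "norm (p - q)^2 / (8 * \<gamma>) \<le> 0" using vle by linarith
  hence "norm (p - q)^2 \<le> 0" using gpos by (simp add: divide_le_0_iff)
  then show ?thesis by simp
qed

lemma prox_min: "\<forall>z. Fq \<gamma> g x (prox \<gamma> g x) \<le> Fq \<gamma> g x z"
proof -
  have "\<exists>!p. \<forall>z. Fq \<gamma> g x p \<le> Fq \<gamma> g x z" using prox_exists prox_unique by blast
  from theI'[OF this] show ?thesis unfolding prox_def Fq_def .
qed

lemma moreau_eq: "moreau_env \<gamma> g x = Fq \<gamma> g x (prox \<gamma> g x)"
proof -
  have "moreau_env \<gamma> g x = (INF y. Fq \<gamma> g x y)" unfolding moreau_env_def Fq_def ..
  also have "\<dots> = Fq \<gamma> g x (prox \<gamma> g x)"
    using prox_min by (intro order.antisym INF_lower INF_greatest) auto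
  finally show ?thesis .
qed

definition "Gp x = real_of_ereal (g (prox \<gamma> g x))"

lemma g_prox: "g (prox \<gamma> g x) = ereal (Gp x)"
proof -
  obtain a where "g (prox \<gamma> g x) = ereal a" using Fq_min_finite[OF prox_min] by blast
  then show ?thesis unfolding Gp_def by simp
qed

definition "En x = real_of_ereal (moreau_env \<gamma> g x)"

lemma moreau_real: "moreau_env \<gamma> g x = ereal (Gp x + norm (prox \<gamma> g x - x)^2 / (2 * \<gamma>))"
  unfolding moreau_eq Fq_def g_prox by simp

lemma En_eq: "En x = Gp x + norm (prox \<gamma> g x - x)^2 / (2 * \<gamma>)"
  unfolding En_def moreau_real by simp

lemma En_le: "En x \<le> b + norm (z - x)^2 / (2 * \<gamma>)" if "g z \<le> ereal b"
proof -
  have "Fq \<gamma> g x (prox \<gamma> g x) \<le> Fq \<gamma> g x z" using prox_min by blast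
  also have "\<dots> \<le> ereal b + ereal (norm (z - x)^2 / (2 * \<gamma>))" unfolding Fq_def using that by (rule add_right_mono)
  finally show ?thesis unfolding En_eq unfolding Fq_def g_prox by simp
qed

lemma prox_vi:
  assumes "g z = ereal b"
  shows "Gp x \<le> b + inner (prox \<gamma> g x - x) (z - prox \<gamma> g x) / \<gamma>"
proof -
  define p where "p = prox \<gamma> g x"
  have "Gp x \<le> b + inner (p - x) (z - p) / \<gamma> + t * (norm (z - p)^2 / (2 * \<gamma>))" if t: "0 < t" "t \<le> 1" for t
  proof -
    define pt where "pt = (1 - t) *\<^sub>R p + t *\<^sub>R z"
    have gpt: "g pt \<le> ereal ((1 - t) * Gp x + t * b)" unfolding pt_def
      by (rule cvx_real) (use assms g_prox t p_def in auto)
    have "Fq \<gamma> g x p \<le> Fq \<gamma> g x pt" using prox_min p_def by blast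
    also have "\<dots> \<le> ereal ((1 - t) * Gp x + t * b) + ereal (norm (pt - x) ^ 2 / (2 * \<gamma>))"
      unfolding Fq_def using gpt by (rule add_right_mono)
    finally have 1: "Gp x + norm (p - x)^2 / (2 * \<gamma>) \<le> (1 - t) * Gp x + t * b + norm (pt - x) ^ 2 / (2 * \<gamma>)"
      unfolding Fq_def p_def g_prox by simp
    have ptx: "pt - x = (p - x) + t *\<^sub>R (z - p)" unfolding pt_def by (simp add: algebra_simps)
    have "norm (pt - x)^2 = norm (p - x)^2 + 2 * t * inner (p - x) (z - p) + t^2 * norm (z - p)^2"
      unfolding ptx norm_add_sq[of "p - x" "t *\<^sub>R (z - p)"] by (simp add: power_mult_distrib mult.assoc)
    with 1 have "t * Gp x \<le> t * b + (2 * t * inner (p - x) (z - p) + t^2 * norm (z - p)^2) / (2 * \<gamma>)"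
      by (simp add: field_simps add_divide_distrib)
    moreover have "t * b + (2 * t * inner (p - x) (z - p) + t^2 * norm (z - p)^2) / (2 * \<gamma>)
        = t * (b + inner (p - x) (z - p) / \<gamma> + t * (norm (z - p)^2 / (2 * \<gamma>)))"
      using gpos by (simp add: field_simps power2_eq_square)
    ultimately have "t * Gp x \<le> t * (b + inner (p - x) (z - p) / \<gamma> + t * (norm (z - p)^2 / (2 * \<gamma>)))"
      by linarith
    then show ?thesis using t by simp
  qed
  then show ?thesis unfolding p_def using small_t by blast
qed

lemma prox_nonexp: "norm (prox \<gamma> g x - prox \<gamma> g y) \<le> norm (x - y)"
proof -
  define p where "p = prox \<gamma> g x"
  define q where "q = prox \<gamma> g y"
  have 1: "Gp x \<le> Gp y + inner (p - x) (q - p) / \<gamma>" using prox_vi[OF g_prox[of y]] p_def q_def by simp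
  have 2: "Gp y \<le> Gp x + inner (q - y) (p - q) / \<gamma>" using prox_vi[OF g_prox[of x]] p_def q_def by simp
  have "0 \<le> inner (p - x) (q - p) + inner (q - y) (p - q)" using 1 2 gpos
    by (simp add: field_simps add_divide_distrib[symmetric])
  also have "\<dots> = inner (x - y) (p - q) - norm (p - q)^2"
    by (simp add: power2_norm_eq_inner inner_diff_left inner_diff_right inner_commute algebra_simps)
  finally have "norm (p - q)^2 \<le> inner (x - y) (p - q)" by simp
  also have "\<dots> \<le> norm (x - y) * norm (p - q)" by (rule norm_cauchy_schwarz)
  finally have "norm (p - q) * norm (p - q) \<le> norm (x - y) * norm (p - q)" by (simp add: power2_eq_square)
  then show ?thesis unfolding p_def q_def
    by (cases "norm (p - q) = 0") (auto simp: p_def q_def)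
qed

lemma En_bound:
  "\<bar>En y - En x - inner ((1/\<gamma>) *\<^sub>R (x - prox \<gamma> g x)) (y - x)\<bar> \<le> norm (y - x)^2 / (2 * \<gamma>)"
proof -
  define p where "p = prox \<gamma> g x"
  define q where "q = prox \<gamma> g y"
  define D where "D = inner (x - p) (y - x) / \<gamma>"
  have Dd: "inner ((1/\<gamma>) *\<^sub>R (x - prox \<gamma> g x)) (y - x) = D" unfolding D_def p_def by simp
  have Ex: "En x = Gp x + norm (p - x)^2 / (2 * \<gamma>)" using En_eq p_def by simp
  have Ey: "En y = Gp y + norm (q - y)^2 / (2 * \<gamma>)" using En_eq q_def by simp
  have u1: "En y \<le> Gp x + norm (p - y)^2 / (2 * \<gamma>)" using En_le[of p "Gp x" y] g_prox p_def by simp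
  have u2: "En x \<le> Gp y + norm (q - x)^2 / (2 * \<gamma>)" using En_le[of q "Gp y" x] g_prox q_def by simp
  have e1: "norm (p - y)^2 = norm (p - x)^2 - 2 * inner (p - x) (y - x) + norm (y - x)^2"
    using norm_diff_sq[of "p - x" "y - x"] by simp
  have e2: "norm (q - y)^2 = norm (q - x)^2 - 2 * inner (q - x) (y - x) + norm (y - x)^2"
    using norm_diff_sq[of "q - x" "y - x"] by simp
  have up: "En y - En x \<le> D + norm (y - x)^2 / (2 * \<gamma>)"
  proof -
    have "En y - En x \<le> (norm (p - y)^2 - norm (p - x)^2) / (2 * \<gamma>)" using u1 Ex by (simp add: diff_divide_distrib)
    also have "\<dots> = D + norm (y - x)^2 / (2 * \<gamma>)" unfolding e1 D_def using gpos
      by (simp add: field_simps inner_diff_left inner_commute)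
    finally show ?thesis .
  qed
  have nq: "norm (p - q) \<le> norm (y - x)" using prox_nonexp[of x y] p_def q_def by (simp add: norm_minus_commute)
  have "inner (p - q) (y - x) \<ge> - (norm (y - x) * norm (y - x))"
  proof -
    have "\<bar>inner (p - q) (y - x)\<bar> \<le> norm (p - q) * norm (y - x)" by (rule Cauchy_Schwarz_ineq2)
    also have "\<dots> \<le> norm (y - x) * norm (y - x)" using nq by (simp add: mult_right_mono)
    finally show ?thesis by linarith
  qed
  hence ip: "- inner (q - x) (y - x) \<ge> inner (x - p) (y - x) - norm (y - x)^2"
    by (simp add: inner_diff_left power2_eq_square algebra_simps)
  have lo: "En y - En x \<ge> D - norm (y - x)^2 / (2 * \<gamma>)"
  proof -
    have "En y - En x \<ge> (norm (q - y)^2 - norm (q - x)^2) / (2 * \<gamma>)" using u2 Ey by (simp add: diff_divide_distrib)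
    moreover have "(norm (q - y)^2 - norm (q - x)^2) / (2 * \<gamma>) = (- 2 * inner (q - x) (y - x) + norm (y - x)^2) / (2 * \<gamma>)"
      unfolding e2 by simp
    moreover have "(- 2 * inner (q - x) (y - x) + norm (y - x)^2) / (2 * \<gamma>) \<ge> (2 * inner (x - p) (y - x) - norm (y - x)^2) / (2 * \<gamma>)"
      using ip gpos by (intro divide_right_mono) auto
    moreover have "(2 * inner (x - p) (y - x) - norm (y - x)^2) / (2 * \<gamma>) = D - norm (y - x)^2 / (2 * \<gamma>)"
      unfolding D_def using gpos by (simp add: field_simps)
    ultimately show ?thesis by linarith
  qed
  show ?thesis unfolding Dd using up lo by linarith
qed

lemma En_deriv: "(En has_derivative (\<lambda>h. inner ((1/\<gamma>) *\<^sub>R (x - prox \<gamma> g x)) h)) (at x)"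
  unfolding has_derivative_iff_norm
proof (intro conjI)
  show "bounded_linear (\<lambda>h. inner ((1/\<gamma>) *\<^sub>R (x - prox \<gamma> g x)) h)" by (rule bounded_linear_inner_right)
  show "((\<lambda>y. norm (En y - En x - inner ((1/\<gamma>) *\<^sub>R (x - prox \<gamma> g x)) (y - x)) / norm (y - x)) \<longlongrightarrow> 0) (at x)"
  proof (rule Lim_null_comparison)
    show "\<forall>\<^sub>F y in at x. norm (norm (En y - En x - inner ((1/\<gamma>) *\<^sub>R (x - prox \<gamma> g x)) (y - x)) / norm (y - x)) \<le> norm (y - x) / (2 * \<gamma>)"
    proof (rule always_eventually, rule allI)
      fix y
      show "norm (norm (En y - En x - inner ((1/\<gamma>) *\<^sub>R (x - prox \<gamma> g x)) (y - x)) / norm (y - x)) \<le> norm (y - x) / (2 * \<gamma>)"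
      proof (cases "y = x")
        case False
        hence "norm (y - x) > 0" by simp
        have "norm (norm (En y - En x - inner ((1/\<gamma>) *\<^sub>R (x - prox \<gamma> g x)) (y - x)) / norm (y - x))
           = \<bar>En y - En x - inner ((1/\<gamma>) *\<^sub>R (x - prox \<gamma> g x)) (y - x)\<bar> / norm (y - x)" by simp
        also have "\<dots> \<le> (norm (y - x)^2 / (2 * \<gamma>)) / norm (y - x)"
          using En_bound[of y x] \<open>norm (y - x) > 0\<close> by (intro divide_right_mono) auto
        also have "\<dots> = norm (y - x) / (2 * \<gamma>)" using \<open>norm (y - x) > 0\<close> by (simp add: power2_eq_square)
        finally show ?thesis .
      qed (use gpos in simp)
    qed
    have "((\<lambda>y. norm (y - x) / (2 * \<gamma>)) \<longlongrightarrow> norm (x - x) / (2 * \<gamma>)) (at x)"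
      using gpos by (intro tendsto_intros) auto
    then show "((\<lambda>y. norm (y - x) / (2 * \<gamma>)) \<longlongrightarrow> 0) (at x)" by simp
  qed
qed

lemma norm_sq_convex:
  fixes a b :: "'b::real_inner"
  assumes "0 \<le> t" "t \<le> 1"
  shows "norm ((1 - t) *\<^sub>R a + t *\<^sub>R b)^2 \<le> (1 - t) * norm a^2 + t * norm b^2"
proof -
  have h1: "norm ((1 - t) *\<^sub>R a + t *\<^sub>R b)^2 = (1-t)^2 * norm a^2 + 2 * ((1-t) * t) * inner a b + t^2 * norm b^2"
    unfolding norm_add_sq[of "(1 - t) *\<^sub>R a" "t *\<^sub>R b"] by (simp add: power_mult_distrib mult.assoc)
  have h2: "norm (a - b)^2 = norm a^2 - 2 * inner a b + norm b^2" by (rule norm_diff_sq)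
  have "0 \<le> (1 - t) * t * norm (a - b)^2" using assms by simp
  hence h3: "0 \<le> (1 - t) * t * (norm a^2 - 2 * inner a b + norm b^2)" unfolding h2 .
  have h4: "(1 - t) * norm a^2 + t * norm b^2 - ((1-t)^2 * norm a^2 + 2 * ((1-t) * t) * inner a b + t^2 * norm b^2)
      = (1 - t) * t * (norm a^2 - 2 * inner a b + norm b^2)"
    by (simp add: algebra_simps power2_eq_square)
  show ?thesis unfolding h1 using h3 h4 by linarith
qed

lemma En_convex: "convex_on UNIV En"
proof (rule convex_onI)
  fix t :: real and u v :: 'a assume t: "0 < t" "t < 1"
  define w where "w = (1 - t) *\<^sub>R u + t *\<^sub>R v"
  define z where "z = (1 - t) *\<^sub>R prox \<gamma> g u + t *\<^sub>R prox \<gamma> g v"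
  have gz: "g z \<le> ereal ((1 - t) * Gp u + t * Gp v)" unfolding z_def by (rule cvx_real) (use g_prox t in auto)
  have zw: "z - w = (1 - t) *\<^sub>R (prox \<gamma> g u - u) + t *\<^sub>R (prox \<gamma> g v - v)"
    unfolding z_def w_def by (simp add: algebra_simps)
  have "En w \<le> (1 - t) * Gp u + t * Gp v + norm (z - w)^2 / (2 * \<gamma>)" by (rule En_le[OF gz])
  also have "norm (z - w)^2 \<le> (1 - t) * norm (prox \<gamma> g u - u)^2 + t * norm (prox \<gamma> g v - v)^2"
    unfolding zw using t by (intro norm_sq_convex) auto
  hence "norm (z - w)^2 / (2 * \<gamma>) \<le> ((1 - t) * norm (prox \<gamma> g u - u)^2 + t * norm (prox \<gamma> g v - v)^2) / (2 * \<gamma>)"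
    using gpos by (intro divide_right_mono) auto
  finally have "En w \<le> (1 - t) * Gp u + t * Gp v + ((1 - t) * norm (prox \<gamma> g u - u)^2 + t * norm (prox \<gamma> g v - v)^2) / (2 * \<gamma>)"
    by simp
  also have "\<dots> = (1 - t) * En u + t * En v" unfolding En_eq using gpos by (simp add: field_simps)
  finally show "En ((1 - t) *\<^sub>R u + t *\<^sub>R v) \<le> (1 - t) * En u + t * En v" unfolding w_def .
qed auto

end



lemma sym_inner:
  fixes M :: "real^'n^'n"
  assumes "transpose M = M" shows "inner x (M *v y) = inner (M *v x) y"
proof -
  have "inner x (M *v y) = inner (x v* M) y" by (simp add: dot_lmul_matrix)
  also have "x v* M = M *v x" using vector_transpose_matrix[of x M] assms by simp
  finally show ?thesis .
qed

lemma transpose_diff: "transpose (A - B) = transpose A - transpose (B :: real^'n^'n)"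
  by (simp add: transpose_def vec_eq_iff)

lemma quad_expand:
  fixes M :: "real^'n^'n"
  assumes "transpose M = M"
  shows "inner (x + s *\<^sub>R y) (M *v (x + s *\<^sub>R y)) = inner x (M *v x) + 2 * s * inner y (M *v x) + s^2 * inner y (M *v y)"
proof -
  have "inner x (M *v y) = inner y (M *v x)" using sym_inner[OF assms, of x y] by (simp add: inner_commute)
  then show ?thesis
    by (simp add: matrix_vector_right_distrib matrix_vector_mult_scaleR inner_add_left inner_add_right power2_eq_square algebra_simps)
qed

lemma quad_convex:
  fixes M :: "real^'n^'n"
  assumes "transpose M = M" "\<And>x. inner x (M *v x) \<ge> 0"
  shows "convex_on UNIV (\<lambda>x. inner x (M *v x))"
proof (rule convex_onI)
  fix t :: real and u v :: "real^'n" assume t: "0 < t" "t < 1"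
  define d where "d = v - u"
  have w: "(1 - t) *\<^sub>R u + t *\<^sub>R v = u + t *\<^sub>R d" unfolding d_def by (simp add: algebra_simps)
  have v: "v = u + 1 *\<^sub>R d" unfolding d_def by simp
  have "inner v (M *v v) = inner u (M *v u) + 2 * inner d (M *v u) + inner d (M *v d)"
    using quad_expand[OF assms(1), of u 1 d] v by simp
  moreover have "inner (u + t *\<^sub>R d) (M *v (u + t *\<^sub>R d)) = inner u (M *v u) + 2 * t * inner d (M *v u) + t^2 * inner d (M *v d)"
    using quad_expand[OF assms(1)] by simp
  moreover have "0 \<le> t * (1 - t) * inner d (M *v d)" using t assms(2)[of d] by simp
  moreover have "(1 - t) * inner u (M *v u) + t * inner v (M *v v)
      - (inner u (M *v u) + 2 * t * inner d (M *v u) + t^2 * inner d (M *v d)) = t * (1 - t) * inner d (M *v d)"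
    unfolding \<open>inner v (M *v v) = inner u (M *v u) + 2 * inner d (M *v u) + inner d (M *v d)\<close>
    by (simp add: algebra_simps power2_eq_square)
  ultimately show "inner ((1 - t) *\<^sub>R u + t *\<^sub>R v) (M *v ((1 - t) *\<^sub>R u + t *\<^sub>R v))
      \<le> (1 - t) * inner u (M *v u) + t * inner v (M *v v)"
    unfolding w by linarith
qed auto

lemma pd_invertible:
  fixes M :: "real^'n^'n"
  assumes "pd_mat M"
  shows "matrix_inv M ** M = mat 1" "M ** matrix_inv M = mat 1"
proof -
  have "\<forall>x. M *v x = 0 \<longrightarrow> x = 0" using assms unfolding pd_mat_def by (metis inner_zero_right less_irrefl)
  hence "invertible M" using matrix_left_invertible_ker invertible_left_inverse by blast
  hence "\<exists>A'. M ** A' = mat 1 \<and> A' ** M = mat 1" unfolding invertible_def .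
  from someI_ex[OF this] show "matrix_inv M ** M = mat 1" "M ** matrix_inv M = mat 1"
    unfolding matrix_inv_def by auto
qed

lemma sym_inv:
  fixes M :: "real^'n^'n"
  assumes "pd_mat M" "transpose M = M"
  shows "transpose (matrix_inv M) = matrix_inv M"
proof -
  let ?Q = "matrix_inv M"
  have "transpose ?Q ** M = mat 1"
    using pd_invertible(2)[OF assms(1)] assms(2) by (metis matrix_transpose_mul transpose_mat)
  hence "transpose ?Q = transpose ?Q ** (M ** ?Q)" using pd_invertible(2)[OF assms(1)] by simp
  also have "\<dots> = ?Q" using \<open>transpose ?Q ** M = mat 1\<close> by (simp add: matrix_mul_assoc)
  finally show ?thesis .
qed



lemma rayleigh_min:
  fixes P :: "real^'n^'n"
  assumes sym: "transpose P = P"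
  shows "\<exists>v m. norm v = 1 \<and> P *v v = m *\<^sub>R v \<and> (\<forall>x. inner x (P *v x) \<ge> m * norm x ^ 2)"
proof -
  have "\<exists>v\<in>sphere 0 1. \<forall>y\<in>sphere 0 1. inner v (P *v v) \<le> inner y (P *v y)"
  proof (rule continuous_attains_inf)
    have cP: "continuous_on UNIV (\<lambda>x. P *v x)" by (rule linear_continuous_on) simp
    show "continuous_on (sphere 0 1) (\<lambda>v. inner v (P *v v))"
      by (intro continuous_intros continuous_on_subset[OF cP]) auto
  qed auto
  then obtain v where v: "norm v = 1" "\<And>y. norm y = 1 \<Longrightarrow> inner v (P *v v) \<le> inner y (P *v y)" by auto
  define m where "m = inner v (P *v v)"
  have low: "inner x (P *v x) \<ge> m * norm x ^ 2" for x
  proof (cases "x = 0")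
    case False
    define y where "y = (1 / norm x) *\<^sub>R x"
    have "norm y = 1" using False y_def by simp
    hence "m \<le> inner y (P *v y)" using v m_def by simp
    also have "\<dots> = inner x (P *v x) / norm x ^ 2" unfolding y_def
      by (simp add: matrix_vector_mult_scaleR power2_eq_square)
    finally show ?thesis using False by (simp add: field_simps)
  qed simp
  define M' where "M' = P - m *\<^sub>R mat 1"
  have M'v: "M' *v x = P *v x - m *\<^sub>R x" for x
    unfolding M'_def by (simp add: matrix_vector_mult_diff_rdistrib scaleR_matrix_vector_assoc[symmetric])
  have symM': "transpose M' = M'" unfolding M'_def using sym by (simp add: transpose_diff transpose_scalar)
  have qM': "inner x (M' *v x) = inner x (P *v x) - m * norm x ^ 2" for x
    unfolding M'v by (simp add: inner_diff_right power2_norm_eq_inner)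
  have psd: "inner x (M' *v x) \<ge> 0" for x using low[of x] qM' by simp
  have zero: "inner v (M' *v v) = 0" using qM'[of v] v m_def by simp
  define w where "w = M' *v v"
  have "2 * norm w ^ 2 \<le> 0 + r * inner w (M' *v w)" if "0 < r" "r \<le> 1" for r
  proof -
    have "0 \<le> inner (v + (-r) *\<^sub>R w) (M' *v (v + (-r) *\<^sub>R w))" by (rule psd)
    also have "\<dots> = - 2 * r * norm w ^ 2 + r^2 * inner w (M' *v w)"
      unfolding quad_expand[OF symM'] zero w_def by (simp add: power2_norm_eq_inner)
    finally have "r * (2 * norm w ^ 2) \<le> r * (r * inner w (M' *v w))" by (simp add: algebra_simps power2_eq_square)
    then show ?thesis using that by simp
  qed
  hence "2 * norm w ^ 2 \<le> 0" by (rule small_t)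
  hence "w = 0" by simp
  hence "P *v v = m *\<^sub>R v" using M'v w_def by simp
  then show ?thesis using v low by blast
qed

lemma P_pd:
  fixes A :: "real^'n^'n" and \<gamma> :: real
  assumes symA: "transpose A = A" and pdA: "pd_mat A" and gpos: "\<gamma> > 0"
    and pdM: "pd_mat (mat 1 - \<gamma> *\<^sub>R A)"
    and x: "x \<noteq> 0"
  shows "inner x ((matrix_inv (mat 1 - \<gamma> *\<^sub>R A) - mat 1) *v x) > 0"
proof -
  define M where "M = mat 1 - \<gamma> *\<^sub>R A"
  define Q where "Q = matrix_inv M"
  have Mv: "M *v z = z - \<gamma> *\<^sub>R (A *v z)" for z
    unfolding M_def by (simp add: matrix_vector_mult_diff_rdistrib scaleR_matrix_vector_assoc[symmetric])
  define y where "y = Q *v x"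
  have My: "M *v y = x" unfolding y_def Q_def
    using pd_invertible(2)[OF pdM[folded M_def]] by (simp add: matrix_vector_mul_assoc)
  have "y \<noteq> 0" using My x by auto
  define w where "w = A *v y"
  define a where "a = inner y w"
  define s where "s = norm w ^ 2"
  define bb where "bb = inner w (A *v w)"
  have a: "a > 0" using pdA \<open>y \<noteq> 0\<close> unfolding pd_mat_def a_def w_def by simp
  have "w \<noteq> 0" using a a_def by auto
  have bb: "bb > 0" using pdA \<open>w \<noteq> 0\<close> unfolding pd_mat_def bb_def by simp
  have s: "s > 0" using \<open>w \<noteq> 0\<close> s_def by simp
  have "inner w (M *v w) > 0" using pdM \<open>w \<noteq> 0\<close> unfolding pd_mat_def M_def by simp
  hence sb: "\<gamma> * bb < s" unfolding Mv bb_def s_def by (simp add: inner_diff_right power2_norm_eq_inner)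
  have wAy: "inner w (A *v y) = s" unfolding w_def s_def by (simp add: power2_norm_eq_inner)
  have ya: "inner y (A *v y) = a" by (simp add: a_def w_def)
  have psd: "inner z (A *v z) \<ge> 0" for z using pdA unfolding pd_mat_def by (cases "z = 0") (auto intro: less_imp_le)
  have "0 \<le> inner (y + (- (s / bb)) *\<^sub>R w) (A *v (y + (- (s / bb)) *\<^sub>R w))" by (rule psd)
  also have "\<dots> = a - 2 * (s / bb) * s + (s / bb)^2 * bb"
    unfolding quad_expand[OF symA] wAy ya bb_def[symmetric] by (simp add: power2_eq_square)
  also have "\<dots> = a - s^2 / bb" using bb by (simp add: field_simps power2_eq_square)
  finally have "s^2 \<le> a * bb" using bb by (simp add: field_simps)
  hence "\<gamma> * s^2 \<le> a * (\<gamma> * bb)" using gpos by (simp add: algebra_simps mult_left_mono)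
  also have "\<dots> < a * s" using sb a by simp
  finally have "\<gamma> * s < a" using s by (simp add: power2_eq_square)
  have "inner x ((Q - mat 1) *v x) = inner (M *v y) y - inner (M *v y) (M *v y)"
    unfolding y_def using My by (simp add: matrix_vector_mult_diff_rdistrib inner_diff_right y_def inner_commute)
  also have "\<dots> = \<gamma> * (a - \<gamma> * s)" unfolding Mv a_def s_def w_def
    by (simp add: inner_diff_left inner_diff_right power2_norm_eq_inner algebra_simps inner_commute)
  also have "\<dots> > 0" using gpos \<open>\<gamma> * s < a\<close> by simp
  finally show ?thesis unfolding Q_def M_def .
qed

theorem lemma5p7:
  fixes A :: "real^'n^'n" and b :: "real^'n" and g :: "real^'n \<Rightarrow> ereal" and \<gamma> :: real
    and Q P :: "real^'n^'n" and c :: "real^'n" and \<psi> :: "real^'n \<Rightarrow> real"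
    and grad :: "real^'n \<Rightarrow> real^'n" and L :: real
  assumes symA: "transpose A = A" and psdA: "psd_mat A"
    and proper: "proper_fun g" and lsc: "lsc_fun g" and cvx: "ereal_convex g"
    and gpos: "\<gamma> > 0" and pdI: "pd_mat (mat 1 - \<gamma> *\<^sub>R A)"
    and Q_def: "Q = matrix_inv (mat 1 - \<gamma> *\<^sub>R A)"
    and c_def: "c = \<gamma> *\<^sub>R (Q *v b)"
    and P_def: "P = Q - mat 1"
    and psi_def: "\<And>u. \<psi> u = (1/2) * ((P *v u) \<bullet> u) + c \<bullet> u + \<gamma> * real_of_ereal (moreau_env \<gamma> g u)"
    and grad_def: "\<And>u. grad u = Q *v u - prox \<gamma> g u + c"
    and ell_def: "L = 1 + onorm (\<lambda>x. Q *v x)"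
  shows "(\<forall>u. moreau_env \<gamma> g u \<noteq> \<infinity> \<and> moreau_env \<gamma> g u \<noteq> -\<infinity>)
    \<and> (\<forall>u. ereal (\<psi> u) = ereal ((1/2) * ((P *v u) \<bullet> u) + c \<bullet> u)
              + ereal \<gamma> * g (prox \<gamma> g u) + ereal ((1/2) * norm (u - prox \<gamma> g u) ^ 2))
    \<and> (\<forall>u. (\<psi> has_derivative (\<lambda>h. grad u \<bullet> h)) (at u))
    \<and> continuous_on UNIV grad
    \<and> lipschitz_on L UNIV grad
    \<and> (pd_mat A \<longrightarrow> lambda_min P > 0 \<and> strongly_convex_on UNIV \<psi> (lambda_min P))"
proof -
  note H = proper lsc cvx gpos
  define E where "E = En g \<gamma>"
  define pr where "pr = prox \<gamma> g"
  have E_def': "E u = real_of_ereal (moreau_env \<gamma> g u)" for u unfolding E_def En_def[OF H] ..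
  have psi': "\<psi> u = (1/2) * ((P *v u) \<bullet> u) + c \<bullet> u + \<gamma> * E u" for u using psi_def E_def' by simp
  have symM: "transpose (mat 1 - \<gamma> *\<^sub>R A) = mat 1 - \<gamma> *\<^sub>R A" using symA by (simp add: transpose_diff transpose_scalar)
  have symQ: "transpose Q = Q" unfolding Q_def by (rule sym_inv[OF pdI symM])
  have symP: "transpose P = P" unfolding P_def using symQ by (simp add: transpose_diff)
  have Pv: "P *v u = Q *v u - u" for u unfolding P_def by (simp add: matrix_vector_mult_diff_rdistrib)
  have p1: "\<forall>u. moreau_env \<gamma> g u \<noteq> \<infinity> \<and> moreau_env \<gamma> g u \<noteq> -\<infinity>"
    using moreau_real[OF H] by simp
  have p2: "\<forall>u. ereal (\<psi> u) = ereal ((1/2) * ((P *v u) \<bullet> u) + c \<bullet> u)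
              + ereal \<gamma> * g (prox \<gamma> g u) + ereal ((1/2) * norm (u - prox \<gamma> g u) ^ 2)"
  proof
    fix u
    have "\<psi> u = (1/2) * ((P *v u) \<bullet> u) + c \<bullet> u + \<gamma> * Gp g \<gamma> u + (1/2) * norm (u - prox \<gamma> g u) ^ 2"
      unfolding psi' E_def En_eq[OF H] using gpos by (simp add: field_simps norm_minus_commute)
    then show "ereal (\<psi> u) = ereal ((1/2) * ((P *v u) \<bullet> u) + c \<bullet> u)
              + ereal \<gamma> * g (prox \<gamma> g u) + ereal ((1/2) * norm (u - prox \<gamma> g u) ^ 2)"
      unfolding g_prox[OF H] by simp
  qed
  have p3: "(\<psi> has_derivative (\<lambda>h. grad u \<bullet> h)) (at u)" for u
  proof -
    have dP: "((\<lambda>u. P *v u) has_derivative (\<lambda>h. P *v h)) (at u)"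
      by (rule bounded_linear_imp_has_derivative) simp
    have dq: "((\<lambda>u. (P *v u) \<bullet> u) has_derivative (\<lambda>h. (P *v u) \<bullet> h + (P *v h) \<bullet> u)) (at u)"
      by (rule has_derivative_inner[OF dP has_derivative_ident])
    have dE: "(E has_derivative (\<lambda>h. inner ((1/\<gamma>) *\<^sub>R (u - prox \<gamma> g u)) h)) (at u)"
      unfolding E_def by (rule En_deriv[OF H])
    have d: "((\<lambda>u. (1/2) * ((P *v u) \<bullet> u) + c \<bullet> u + \<gamma> * E u) has_derivative
       (\<lambda>h. (1/2) * ((P *v u) \<bullet> h + (P *v h) \<bullet> u) + c \<bullet> h + \<gamma> * inner ((1/\<gamma>) *\<^sub>R (u - prox \<gamma> g u)) h)) (at u)"
      by (intro has_derivative_add has_derivative_mult_right dq dE has_derivative_inner_right has_derivative_ident)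
    have eq: "(\<lambda>h. (1/2) * ((P *v u) \<bullet> h + (P *v h) \<bullet> u) + c \<bullet> h + \<gamma> * inner ((1/\<gamma>) *\<^sub>R (u - prox \<gamma> g u)) h)
        = (\<lambda>h. grad u \<bullet> h)"
    proof
      fix h
      have "(P *v h) \<bullet> u = (P *v u) \<bullet> h" using sym_inner[OF symP, of u h] by (simp add: inner_commute)
      then show "(1/2) * ((P *v u) \<bullet> h + (P *v h) \<bullet> u) + c \<bullet> h + \<gamma> * inner ((1/\<gamma>) *\<^sub>R (u - prox \<gamma> g u)) h
          = grad u \<bullet> h"
        unfolding grad_def Pv using gpos by (simp add: inner_diff_left inner_add_left algebra_simps diff_divide_distrib)
    qed
    have "\<psi> = (\<lambda>u. (1/2) * ((P *v u) \<bullet> u) + c \<bullet> u + \<gamma> * E u)" using psi' by auto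
    then show ?thesis using has_derivative_eq_rhs[OF d eq] by simp
  qed
  have bl: "bounded_linear (\<lambda>x. Q *v x)" by simp
  have p5: "lipschitz_on L UNIV grad"
  proof (rule lipschitz_onI)
    show "0 \<le> L" unfolding ell_def using onorm_pos_le[OF bl] by simp
    fix x y :: "real^'n"
    have "grad x - grad y = Q *v (x - y) - (prox \<gamma> g x - prox \<gamma> g y)"
      unfolding grad_def by (simp add: matrix_vector_mult_diff_distrib algebra_simps)
    hence "dist (grad x) (grad y) \<le> norm (Q *v (x - y)) + norm (prox \<gamma> g x - prox \<gamma> g y)"
      by (simp add: dist_norm norm_triangle_ineq4)
    also have "\<dots> \<le> onorm (\<lambda>x. Q *v x) * norm (x - y) + norm (x - y)"
      using onorm[OF bl, of "x - y"] prox_nonexp[OF H, of x y] by simp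
    finally show "dist (grad x) (grad y) \<le> L * dist x y" unfolding ell_def by (simp add: dist_norm algebra_simps)
  qed
  have p4: "continuous_on UNIV grad" by (rule lipschitz_on_continuous_on[OF p5])
  have p6: "pd_mat A \<longrightarrow> lambda_min P > 0 \<and> strongly_convex_on UNIV \<psi> (lambda_min P)"
  proof
    assume pdA: "pd_mat A"
    obtain v m where v: "norm v = 1" "P *v v = m *\<^sub>R v" and low: "\<And>x. inner x (P *v x) \<ge> m * norm x ^ 2"
      using rayleigh_min[OF symP] by blast
    have lm: "lambda_min P = m" unfolding lambda_min_def
    proof (rule cInf_eq_minimum)
      show "m \<in> {t. \<exists>v. v \<noteq> 0 \<and> P *v v = t *\<^sub>R v}" using v by (auto intro!: exI[of _ v])
      fix t assume "t \<in> {t. \<exists>v. v \<noteq> 0 \<and> P *v v = t *\<^sub>R v}"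
      then obtain x where x: "x \<noteq> 0" "P *v x = t *\<^sub>R x" by auto
      have "m * norm x ^ 2 \<le> t * norm x ^ 2" using low[of x] x(2) by (simp add: power2_norm_eq_inner)
      then show "m \<le> t" using x(1) by simp
    qed
    have "m = inner v (P *v v)" using v by (simp add: power2_norm_eq_inner[symmetric])
    also have "\<dots> > 0"
    proof -
      have "v \<noteq> 0" using v(1) by auto
      then show ?thesis unfolding P_def Q_def by (rule P_pd[OF symA pdA gpos pdI])
    qed
    finally have mpos: "m > 0" .
    define P' where "P' = P - m *\<^sub>R mat 1"
    have P'v: "P' *v x = P *v x - m *\<^sub>R x" for x
      unfolding P'_def by (simp add: matrix_vector_mult_diff_rdistrib scaleR_matrix_vector_assoc[symmetric])
    have symP': "transpose P' = P'" unfolding P'_def using symP by (simp add: transpose_diff transpose_scalar)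
    have psdP': "inner x (P' *v x) \<ge> 0" for x using low[of x] unfolding P'v
      by (simp add: inner_diff_right power2_norm_eq_inner)
    have cq: "convex_on UNIV (\<lambda>x. inner x (P' *v x))" by (rule quad_convex[OF symP' psdP'])
    have cl: "convex_on UNIV (\<lambda>x. c \<bullet> x)"
      by (rule convex_onI) (auto simp: inner_add_right)
    have cE: "convex_on UNIV E" unfolding E_def by (rule En_convex[OF H])
    have "convex_on UNIV (\<lambda>x. (1/2) * inner x (P' *v x) + c \<bullet> x + \<gamma> * E x)"
      using cq cl cE gpos by (intro convex_on_add convex_on_cmul) auto
    moreover have "(\<lambda>x. (1/2) * inner x (P' *v x) + c \<bullet> x + \<gamma> * E x) = (\<lambda>x. \<psi> x - m / 2 * norm x ^ 2)"
    proof
      fix x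
      show "(1/2) * inner x (P' *v x) + c \<bullet> x + \<gamma> * E x = \<psi> x - m / 2 * norm x ^ 2"
        unfolding psi' P'v by (simp add: inner_diff_right power2_norm_eq_inner inner_commute algebra_simps)
    qed
    ultimately show "lambda_min P > 0 \<and> strongly_convex_on UNIV \<psi> (lambda_min P)"
      unfolding strongly_convex_on_def lm using mpos by simp
  qed
  show ?thesis using p1 p2 p3 p4 p5 p6 by blast
qed

end
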